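(* Let $\{l,f_1,\dots,f_M\}$ be a set of generators of $H_2(\mathbb{CP}^2\# M\overline{\mathbb{CP}}^2;\mathbb Z)$, pairwise orthogonal for the intersection form, with $l$ the class of a complex line in $\mathbb{CP}^2$ and $f_i\cdot f_i=-1$. Let $\alpha_1,\dots,\alpha_k$, $k\ge2$, be classes of the form $\alpha_1=l-e^1_1-e^1_2-\dots-e^1_{b_1}$ and $\alpha_i=e^i_1-e^i_2-\dots-e^i_{b_i}$ for $i=2,\dots,k$, where $b_i\ge1$, each $e^i_j\in\{f_1,\dots,f_M\}$, and $e^i_j\ne e^i_{j'}$ for $j\ne j'$. Suppose $\alpha_i\cdot\alpha_j=1$ if $|i-j|=1$ and $\alpha_i\cdot\alpha_j=0$ if $|i-j|>1$. Let $A^1=\{e^1_1,\dots,e^1_{b_1}\}$ and $A^i=\{e^i_2,\dots,e^i_{b_i}\}$ for $i=2,\dots,k$. Then: (1) for every $j=2,\dots,k$ there is an index $i$ with $1\le i<j$ such that $e^j_1\in A^i$; moreover, if $e^j_1\in A^i$ with $i<j-1$, then $e^h_1\in A^i\cap A^j$ for some index $h$ with $i<h<j$; (2) for every $1\le i<j\le k$, $A^i\cap A^j\subseteq\{e^2_1,\dots,e^k_1\}$. *)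

theory Defs
  imports Main
begin

text \<open>H_2(CP^2 # M \<bar>CP^2\<bar>; Z) is identified with Z^(M+1) via the orthogonal basis
  l, f_1, ..., f_M: a class is its coefficient vector c :: nat \<Rightarrow> int, where
  c 0 is the coefficient of l and c m (1 \<le> m \<le> M) that of f_m.\<close>

definition cls_l :: "nat \<Rightarrow> int" where
  "cls_l = (\<lambda>m. if m = 0 then 1 else 0)"

definition cls_f :: "nat \<Rightarrow> nat \<Rightarrow> int" where
  "cls_f a = (\<lambda>m. if m = a then 1 else 0)"

definition iform :: "nat \<Rightarrow> (nat \<Rightarrow> int) \<Rightarrow> (nat \<Rightarrow> int) \<Rightarrow> int" where
  "iform M x y = x 0 * y 0 - (\<Sum>m = 1..M. x m * y m)"

text \<open>e i j is the index m with e^i_j = f_m.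
  alpha_1 = l - e^1_1 - ... - e^1_{b_1};  alpha_i = e^i_1 - e^i_2 - ... - e^i_{b_i}.\<close>
definition alpha :: "(nat \<Rightarrow> nat \<Rightarrow> nat) \<Rightarrow> (nat \<Rightarrow> nat) \<Rightarrow> nat \<Rightarrow> nat \<Rightarrow> int" where
  "alpha e b i = (\<lambda>m.
     (if i = 1 then cls_l m - (\<Sum>j = 1..b 1. cls_f (e 1 j) m)
      else cls_f (e i 1) m - (\<Sum>j = 2..b i. cls_f (e i j) m)))"

definition Aset :: "(nat \<Rightarrow> nat \<Rightarrow> nat) \<Rightarrow> (nat \<Rightarrow> nat) \<Rightarrow> nat \<Rightarrow> nat set" where
  "Aset e b i = (if i = 1 then e 1 ` {1..b 1} else e i ` {2..b i})"

end

theory Submission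
  imports Defs
begin

lemma sum_ind_inj:
  assumes "inj_on f S" "finite S"
  shows "(\<Sum>t\<in>S. (if m = f t then 1 else 0::int)) = (if m \<in> f ` S then 1 else 0)"
proof -
  have "(\<Sum>t\<in>S. (if m = f t then 1 else 0::int)) = (\<Sum>y\<in>f`S. if m = y then 1 else 0)"
    using assms(1) by (simp add: sum.reindex)
  also have "\<dots> = (if m \<in> f ` S then 1 else 0)" using assms(2) by simp
  finally show ?thesis .
qed

lemma iform_sum_right: "finite I \<Longrightarrow> iform M x (\<lambda>m. \<Sum>i\<in>I. y i m) = (\<Sum>i\<in>I. iform M x (y i))"
  unfolding iform_def by (simp add: sum_distrib_left sum_subtractf sum.swap[of _ I])

lemma sum_if_card: "finite S \<Longrightarrow> (\<Sum>m\<in>S. if P m then 1 else 0::int) = int (card (S \<inter> {m. P m}))"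
  by (simp add: sum.If_cases)

theorem lemma4p3:
  fixes M k :: nat and b :: "nat \<Rightarrow> nat" and e :: "nat \<Rightarrow> nat \<Rightarrow> nat"
  assumes k2: "k \<ge> 2"
    and b_pos: "\<forall>i\<in>{1..k}. b i \<ge> 1"
    and e_range: "\<forall>i\<in>{1..k}. \<forall>j\<in>{1..b i}. e i j \<in> {1..M}"
    and e_inj: "\<forall>i\<in>{1..k}. inj_on (e i) {1..b i}"
    and adj: "\<forall>i\<in>{1..k}. \<forall>j\<in>{1..k}. (i + 1 = j \<or> j + 1 = i) \<longrightarrow>
                 iform M (alpha e b i) (alpha e b j) = 1"
    and nonadj: "\<forall>i\<in>{1..k}. \<forall>j\<in>{1..k}. (i + 1 < j \<or> j + 1 < i) \<longrightarrow>
                 iform M (alpha e b i) (alpha e b j) = 0"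
  shows "(\<forall>j\<in>{2..k}. (\<exists>i. 1 \<le> i \<and> i < j \<and> e j 1 \<in> Aset e b i) \<and>
            (\<forall>i. 1 \<le> i \<and> i + 1 < j \<and> e j 1 \<in> Aset e b i \<longrightarrow>
               (\<exists>h. i < h \<and> h < j \<and> e h 1 \<in> Aset e b i \<inter> Aset e b j)))
       \<and> (\<forall>i j. 1 \<le> i \<and> i < j \<and> j \<le> k \<longrightarrow>
            Aset e b i \<inter> Aset e b j \<subseteq> {e h 1 | h. 2 \<le> h \<and> h \<le> k})"
proof -
  define A where "A = Aset e b"
  define al where "al = alpha e b"
  define ga where "ga = (\<lambda>j m. \<Sum>i=1..j. al i m)"
  define G where "G = (\<lambda>j. {m\<in>{1..M}. ga j m = -1})"
  define P where "P = (\<lambda>j. ga j 0 = 1 \<and> (\<forall>m\<in>{1..M}. ga j m = 0 \<or> ga j m = -1))"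
  have x_rng: "e i 1 \<in> {1..M}" if "i\<in>{1..k}" for i using e_range b_pos that by auto
  have A_rng: "A i \<subseteq> {1..M}" if "i\<in>{1..k}" for i
    unfolding A_def Aset_def using e_range that by auto
  have x_notin: "e i 1 \<notin> A i" if i2: "i \<in> {2..k}" for i
  proof
    assume "e i 1 \<in> A i"
    then obtain t where t: "t \<in> {2..b i}" "e i 1 = e i t" using i2 unfolding A_def Aset_def by (auto split: if_splits)
    have inj: "inj_on (e i) {1..b i}" using e_inj i2 by auto
    have "1 \<in> {1..b i}" using b_pos i2 by auto
    moreover have "t \<in> {1..b i}" using t by auto
    ultimately have "1 = t" using inj_onD[OF inj t(2)] by blast
    then show False using t by auto
  qed
  have al0: "al j 0 = (if j = 1 then 1 else 0)" if "j\<in>{1..k}" for j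
  proof -
    have ne: "\<forall>t\<in>{1..b j}. e j t \<noteq> 0" using e_range that by fastforce
    have s1: "(\<Sum>t = 1..b j. cls_f (e j t) 0) = 0"
      by (rule sum.neutral) (use ne in \<open>auto simp: cls_f_def\<close>)
    have s2: "(\<Sum>t = 2..b j. cls_f (e j t) 0) = 0"
      by (rule sum.neutral) (use ne in \<open>auto simp: cls_f_def\<close>)
    have "cls_f (e j 1) 0 = 0" using ne b_pos that by (auto simp: cls_f_def)
    then show ?thesis using s1 s2 unfolding al_def alpha_def by (auto simp: cls_l_def)
  qed
  have alm1: "al 1 m = - (if m \<in> A 1 then 1 else 0)" if "m \<noteq> 0" for m
  proof -
    have "inj_on (e 1) {1..b 1}" using e_inj k2 by auto
    then have "(\<Sum>t = 1..b 1. cls_f (e 1 t) m) = (if m \<in> e 1 ` {1..b 1} then 1 else 0)"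
      unfolding cls_f_def by (rule sum_ind_inj) simp
    then show ?thesis using that unfolding al_def alpha_def A_def Aset_def cls_l_def by simp
  qed
  have alm: "al j m = (if m = e j 1 then 1 else 0) - (if m \<in> A j then 1 else 0)"
    if "j\<in>{2..k}" "m \<noteq> 0" for j m
  proof -
    have "inj_on (e j) {1..b j}" using e_inj that by auto
    then have "inj_on (e j) {2..b j}" by (rule inj_on_subset) auto
    then have "(\<Sum>t = 2..b j. cls_f (e j t) m) = (if m \<in> e j ` {2..b j} then 1 else 0)"
      unfolding cls_f_def by (rule sum_ind_inj) simp
    then show ?thesis using that unfolding al_def alpha_def A_def Aset_def cls_f_def by auto
  qed
  have ga_Suc: "ga (Suc j) m = ga j m + al (Suc j) m" for j m
    unfolding ga_def by simp
  have ga1: "ga 1 m = al 1 m" for m unfolding ga_def by simp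
  have step: "e (Suc j) 1 \<in> G j \<and> A (Suc j) \<inter> G j = {}"
    if j: "1 \<le> j" "Suc j \<le> k" and Pj: "P j" for j
  proof -
    define x where "x = e (Suc j) 1"
    have sj: "Suc j \<in> {2..k}" using j by auto
    have "iform M (al (Suc j)) (ga j) = (\<Sum>i=1..j. iform M (al (Suc j)) (al i))"
      unfolding ga_def by (rule iform_sum_right) simp
    also have "\<dots> = (\<Sum>i=1..j. if i = j then 1 else 0)"
    proof (rule sum.cong)
      fix i assume i: "i \<in> {1..j}"
      show "iform M (al (Suc j)) (al i) = (if i = j then 1 else 0)"
      proof (cases "i = j")
        case True then show ?thesis using adj j unfolding al_def by auto
      next
        case False then show ?thesis using nonadj j i unfolding al_def by auto
      qed
    qed simp
    also have "\<dots> = 1" using j by simp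
    finally have eq1: "iform M (al (Suc j)) (ga j) = 1" .
    have pt: "al (Suc j) m * ga j m = - (if m = x then (if x \<in> G j then 1 else 0) else 0)
              + (if m \<in> A (Suc j) \<inter> G j then 1 else 0)" if m: "m \<in> {1..M}" for m
    proof -
      have "ga j m = 0 \<or> ga j m = -1" using Pj m unfolding P_def by auto
      moreover have "x \<notin> A (Suc j)" using x_notin sj unfolding x_def by auto
      ultimately show ?thesis using alm[OF sj, of m] m unfolding G_def x_def by auto
    qed
    have "(\<Sum>m=1..M. al (Suc j) m * ga j m) =
       (\<Sum>m=1..M. - (if m = x then (if x \<in> G j then 1 else 0) else 0)
              + (if m \<in> A (Suc j) \<inter> G j then 1 else 0))"
      by (rule sum.cong) (simp_all add: pt)
    also have "\<dots> = - (if x \<in> G j then 1 else 0) + int (card ({1..M} \<inter> {m. m \<in> A (Suc j) \<inter> G j}))"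
    proof -
      have xM: "x \<in> {1..M}" using x_rng[of "Suc j"] sj unfolding x_def by simp
      have a: "(\<Sum>m=1..M. - (if m = x then (if x \<in> G j then 1 else 0) else 0::int))
               = - (if x \<in> G j then 1 else 0)"
        using xM by (simp add: sum_negf)
      have c: "(\<Sum>m=1..M. (if m \<in> A (Suc j) \<inter> G j then 1 else 0::int))
               = int (card ({1..M} \<inter> {m. m \<in> A (Suc j) \<inter> G j}))"
        by (rule sum_if_card) simp
      show ?thesis unfolding sum.distrib a c ..
    qed
    finally have eq2: "(\<Sum>m=1..M. al (Suc j) m * ga j m) = - (if x \<in> G j then 1 else 0) + int (card ({1..M} \<inter> {m. m \<in> A (Suc j) \<inter> G j}))" .
    have "al (Suc j) 0 = 0" using al0[of "Suc j"] sj by auto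
    then have "1 = (if x \<in> G j then 1 else 0) - int (card ({1..M} \<inter> {m. m \<in> A (Suc j) \<inter> G j}))"
      using eq1 eq2 unfolding iform_def by simp
    then have "x \<in> G j" and c0: "card ({1..M} \<inter> {m. m \<in> A (Suc j) \<inter> G j}) = 0"
      by (auto split: if_splits)
    from c0 have "{1..M} \<inter> {m. m \<in> A (Suc j) \<inter> G j} = {}" by simp
    then have "A (Suc j) \<inter> G j = {}" unfolding G_def by auto
    then show ?thesis using \<open>x \<in> G j\<close> unfolding x_def by simp
  qed
  have P_all: "1 \<le> j \<Longrightarrow> j \<le> k \<Longrightarrow> P j" for j
  proof (induct j)
    case 0 then show ?case by simp
  next
    case (Suc j)
    show ?case
    proof (cases "j = 0")
      case True
      then show ?thesis unfolding P_def using ga1 alm1 al0[of 1] k2 by auto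
    next
      case False
      then have j1: "1 \<le> j" by simp
      have Pj: "P j" using Suc j1 by simp
      have st: "e (Suc j) 1 \<in> G j" "A (Suc j) \<inter> G j = {}" using step[OF j1 Suc(3) Pj] by auto
      have sj: "Suc j \<in> {2..k}" using j1 Suc by auto
      have xa: "e (Suc j) 1 \<notin> A (Suc j)" using x_notin sj by auto
      have "ga (Suc j) 0 = 1" using ga_Suc[of j 0] al0[of "Suc j"] sj Pj unfolding P_def by auto
      moreover have "ga (Suc j) m = 0 \<or> ga (Suc j) m = -1" if m: "m \<in> {1..M}" for m
      proof -
        have g: "ga j m = 0 \<or> ga j m = -1" using Pj m unfolding P_def by auto
        show ?thesis using ga_Suc[of j m] alm[OF sj, of m] m st xa g unfolding G_def by auto
      qed
      ultimately show ?thesis unfolding P_def by auto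
    qed
  qed
  have Gsub: "1 \<le> j \<Longrightarrow> j \<le> k \<Longrightarrow> \<forall>m\<in>G j. \<exists>i\<in>{1..j}. m \<in> A i" for j
  proof (induct j)
    case 0 then show ?case by simp
  next
    case (Suc j)
    show ?case
    proof (cases "j = 0")
      case True
      then show ?thesis unfolding G_def using ga1 alm1 by (auto split: if_splits)
    next
      case False
      then have j1: "1 \<le> j" by simp
      have Pj: "P j" using P_all Suc j1 by simp
      have IH: "\<forall>m\<in>G j. \<exists>i\<in>{1..j}. m \<in> A i" using Suc j1 by simp
      have sj: "Suc j \<in> {2..k}" using j1 Suc by auto
      show ?thesis
      proof
        fix m assume m: "m \<in> G (Suc j)"
        show "\<exists>i\<in>{1..Suc j}. m \<in> A i"
        proof (cases "m \<in> A (Suc j)")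
          case True then show ?thesis by auto
        next
          case False
          have mM: "m \<in> {1..M}" and "ga (Suc j) m = -1" using m unfolding G_def by auto
          then have "ga j m + al (Suc j) m = -1" using ga_Suc by simp
          moreover have "al (Suc j) m \<ge> 0" using alm[OF sj, of m] False mM by auto
          moreover have "ga j m = 0 \<or> ga j m = -1" using Pj mM unfolding P_def by auto
          ultimately have "ga j m = -1" by auto
          then have "m \<in> G j" using mM unfolding G_def by auto
          then obtain i where "i \<in> {1..j}" "m \<in> A i" using IH by blast
          then show ?thesis by (intro bexI[of _ i]) auto
        qed
      qed
    qed
  qed
  have J: "1 \<le> j \<Longrightarrow> j \<le> k \<Longrightarrow> \<forall>i m. 1 \<le> i \<and> i \<le> j \<and> m \<in> A i \<and> m \<notin> G j \<longrightarrow>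
             (\<exists>h. i < h \<and> h \<le> j \<and> m = e h 1)" for j
  proof (induct j)
    case 0 then show ?case by simp
  next
    case (Suc j)
    show ?case
    proof (cases "j = 0")
      case True
      have "m \<in> G 1" if "m \<in> A 1" for m
        using that alm1 ga1 A_rng[of 1] k2 unfolding G_def by auto
      then show ?thesis using True by auto
    next
      case False
      then have j1: "1 \<le> j" by simp
      have Pj: "P j" using P_all Suc j1 by simp
      have IH: "\<forall>i m. 1 \<le> i \<and> i \<le> j \<and> m \<in> A i \<and> m \<notin> G j \<longrightarrow>
             (\<exists>h. i < h \<and> h \<le> j \<and> m = e h 1)" using Suc j1 by simp
      have sj: "Suc j \<in> {2..k}" using j1 Suc by auto
      have st: "e (Suc j) 1 \<in> G j" "A (Suc j) \<inter> G j = {}" using step[OF j1 _ Pj] Suc by auto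
      have xa: "e (Suc j) 1 \<notin> A (Suc j)" using x_notin sj by auto
      show ?thesis
      proof (intro allI impI)
        fix i m assume im: "1 \<le> i \<and> i \<le> Suc j \<and> m \<in> A i \<and> m \<notin> G (Suc j)"
        have mM: "m \<in> {1..M}" using A_rng[of i] im sj by auto
        have g: "ga j m = 0 \<or> ga j m = -1" using Pj mM unfolding P_def by auto
        have gS: "ga (Suc j) m \<noteq> -1" using im mM unfolding G_def by auto
        show "\<exists>h. i < h \<and> h \<le> Suc j \<and> m = e h 1"
        proof (cases "i = Suc j")
          case True
          then have "m \<in> A (Suc j)" using im by simp
          then have "m \<notin> G j" "m \<noteq> e (Suc j) 1" using st xa by auto
          then have "ga j m = 0" using g mM unfolding G_def by auto
          then have "ga (Suc j) m = -1" using ga_Suc[of j m] alm[OF sj, of m] mM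
              \<open>m \<in> A (Suc j)\<close> \<open>m \<noteq> e (Suc j) 1\<close> by auto
          then show ?thesis using gS by simp
        next
          case False
          show ?thesis
          proof (cases "m = e (Suc j) 1")
            case True
            have "i < Suc j" using False im by auto
            then show ?thesis using True by blast
          next
            case ne: False
            have "m \<notin> G j"
            proof
              assume mG: "m \<in> G j"
              then have "m \<notin> A (Suc j)" using st by auto
              then have "ga (Suc j) m = -1" using ga_Suc[of j m] alm[OF sj, of m] mM ne mG
                unfolding G_def by auto
              then show False using gS by simp
            qed
            then obtain h where "i < h \<and> h \<le> j \<and> m = e h 1" using IH im False by fastforce
            then show ?thesis by auto
          qed
        qed
      qed
    qed
  qed
  have strong2: "\<exists>h. i < h \<and> h < j \<and> m = e h 1"
    if ij: "1 \<le> i" "i < j" "j \<le> k" and m: "m \<in> A i" "m \<in> A j" for i j m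
  proof -
    obtain j' where j': "j = Suc j'" using ij by (cases j) auto
    have j1: "1 \<le> j'" using ij j' by simp
    have "A j \<inter> G j' = {}" using step[OF j1 _ P_all[OF j1]] ij j' by auto
    then have "m \<notin> G j'" using m by auto
    then show ?thesis using J[OF j1] ij m j' by fastforce
  qed
  show ?thesis
  proof (intro conjI ballI allI impI)
    fix j assume j: "j \<in> {2..k}"
    obtain j' where j': "j = Suc j'" using j by (cases j) auto
    have j1: "1 \<le> j'" using j j' by simp
    have "e j 1 \<in> G j'" using step[OF j1 _ P_all[OF j1]] j j' by auto
    then obtain i where "i \<in> {1..j'}" "e j 1 \<in> A i" using Gsub[OF j1] j j' by fastforce
    then show "\<exists>i. 1 \<le> i \<and> i < j \<and> e j 1 \<in> Aset e b i" using j' unfolding A_def by auto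
  next
    fix j i assume j: "j \<in> {2..k}" and i: "1 \<le> i \<and> i + 1 < j \<and> e j 1 \<in> Aset e b i"
    have xi: "e j 1 \<in> A i" using i unfolding A_def by simp
    have jk: "j \<in> {2..k}" using j by simp
    have ne: "A i \<inter> A j \<noteq> {}"
    proof
      assume empty: "A i \<inter> A j = {}"
      have io: "iform M (al i) (al j) = 0" using nonadj i j unfolding al_def by auto
      have xjM: "e j 1 \<in> {1..M}" using x_rng j by auto
      show False
      proof (cases "i = 1")
        case True
        have "al i m * al j m = - (if m = e j 1 then 1 else 0)" if m: "m \<in> {1..M}" for m
          using alm1[of m] alm[OF jk, of m] m True xi empty by auto
        then have "(\<Sum>m=1..M. al i m * al j m) = (\<Sum>m=1..M. - (if m = e j 1 then 1 else 0))"
          by (intro sum.cong) auto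
        also have "\<dots> = -1" using xjM by (simp add: sum_negf)
        finally have "iform M (al i) (al j) = 1" unfolding iform_def using al0[of j] j by simp
        then show False using io by simp
      next
        case False
        then have ik: "i \<in> {2..k}" using i j by auto
        have xne: "e i 1 \<noteq> e j 1" using x_notin[OF ik] xi by auto
        have "al i m * al j m = - (if m = e j 1 then 1 else 0)
                 - (if m = e i 1 then (if e i 1 \<in> A j then 1 else 0) else 0)" if m: "m \<in> {1..M}" for m
          using alm[OF ik, of m] alm[OF jk, of m] m xi empty xne by auto
        then have "(\<Sum>m=1..M. al i m * al j m) = (\<Sum>m=1..M. - (if m = e j 1 then 1 else 0)
                 - (if m = e i 1 then (if e i 1 \<in> A j then 1 else 0) else 0))"
          by (intro sum.cong) auto
        also have "\<dots> = -1 - (if e i 1 \<in> A j then 1 else 0)"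
          using xjM x_rng[of i] ik by (simp add: sum_negf sum_subtractf)
        finally have "iform M (al i) (al j) = 1 + (if e i 1 \<in> A j then 1 else 0)"
          unfolding iform_def using al0[of j] j by simp
        then show False using io by (simp split: if_splits)
      qed
    qed
    then obtain m where m: "m \<in> A i" "m \<in> A j" by auto
    obtain h where "i < h \<and> h < j \<and> m = e h 1" using strong2[OF _ _ _ m] i j by auto
    then show "\<exists>h. i < h \<and> h < j \<and> e h 1 \<in> Aset e b i \<inter> Aset e b j"
      using m unfolding A_def by auto
  next
    fix i j assume ij: "1 \<le> i \<and> i < j \<and> j \<le> k"
    show "Aset e b i \<inter> Aset e b j \<subseteq> {e h 1 | h. 2 \<le> h \<and> h \<le> k}"
    proof
      fix m assume "m \<in> Aset e b i \<inter> Aset e b j"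
      then obtain h where "i < h \<and> h < j \<and> m = e h 1" using strong2[of i j m] ij unfolding A_def by auto
      then show "m \<in> {e h 1 | h. 2 \<le> h \<and> h \<le> k}" using ij by auto
    qed
  qed
qed

end
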